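(* Let $\kappa\in K_2(\mathbb{Q}(T))$. Then there exist a finite set $\Sigma$ of rational points of $S^1$ and a locally constant function $n=n_\kappa\colon S^1\setminus\Sigma\to\mathbb{Z}$ such that for every primitive $\lambda\in X$ with $\mathbb{R}_+\lambda\notin\Sigma$, the residue (tame symbol) of $\kappa$ along the boundary divisor $D_\lambda\cong\mathbb{G}_m$ equals $c\,z^{n(\mathbb{R}_+\lambda)}$ for some constant $c\in\mathbb{Q}^\times$.
   Context: $T=\mathbb{G}_m^2=\operatorname{Spec}\mathbb{Q}[X^*]$ over $\mathbb{Q}$, with cocharacter lattice $X\cong\mathbb{Z}^2$, character lattice $X^*$, and pairing $\langle\,,\rangle\colon X\times X^*\to\mathbb{Z}$. Fix an orientation of $X_{\mathbb{R}}=X\otimes\mathbb{R}$, giving $\wedge\colon X\times X\to\mathbb{Z}$ with $\bigwedge^2X\cong\mathbb{Z}$. $S^1=(X_{\mathbb{R}}\setminus\{0\})/\mathbb{R}_+$ is the circle of rays; a ray is rational if it contains a nonzero point of $X$. For primitive $\lambda\in X$ let $V_\lambda=\{\chi\in X^*:\langle\lambda,\chi\rangle\le0\}$ and $T_\lambda=\operatorname{Spec}\mathbb{Q}[V_\lambda]$, a partial toric compactification of $T$; $D_\lambda=T_\lambda\setminus T$ is an irreducible divisor, $T$-equivariantly isomorphic to $T/\lambda(\mathbb{G}_m)$, and a character $\chi$ vanishes along $D_\lambda$ to order $-\langle\lambda,\chi\rangle$. $D_\lambda$ is identified with $\mathbb{G}_m$ (coordinate $z$) via $\mathbb{G}_m\xrightarrow{\mu}T\to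 T/\lambda(\mathbb{G}_m)$ for any $\mu\in X$ with $\mu\wedge\lambda=1$. The residue along $D_\lambda$ is the tame symbol $\{f,g\}\mapsto(-1)^{v(f)v(g)}g^{v(f)}f^{-v(g)}$ for the valuation $v$ of $D_\lambda$ on $\mathbb{Q}(T)$. *)

theory Defs
  imports "HOL-Analysis.Analysis"
begin

text \<open>Lattices: X = Z^2 (cocharacters), X* = Z^2 (characters), standard pairing,
  orientation wedge (a,b) (c,d) = a d - b c.
  A Laurent polynomial in Q[X*] is a finitely supported function X* -> Q.
  A nonzero rational function in Q(T) is represented as a pair (p,q) of nonzero
  Laurent polynomials, meaning p/q.\<close>

type_synonym lpoly = "int \<times> int \<Rightarrow> rat"
type_synonym ratfun = "lpoly \<times> lpoly"

definition pairing :: "int \<times> int \<Rightarrow> int \<times> int \<Rightarrow> int" where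
  "pairing l c = fst l * fst c + snd l * snd c"

definition wedge :: "int \<times> int \<Rightarrow> int \<times> int \<Rightarrow> int" where
  "wedge a b = fst a * snd b - snd a * fst b"

definition primitive :: "int \<times> int \<Rightarrow> bool" where
  "primitive l \<longleftrightarrow> gcd (fst l) (snd l) = 1"

definition supp :: "lpoly \<Rightarrow> (int \<times> int) set" where
  "supp p = {c. p c \<noteq> 0}"

definition nonzero_lpoly :: "lpoly \<Rightarrow> bool" where
  "nonzero_lpoly p \<longleftrightarrow> finite (supp p) \<and> supp p \<noteq> {}"

definition topw :: "int \<times> int \<Rightarrow> lpoly \<Rightarrow> int" where
  "topw l p = Max (pairing l ` supp p)"

text \<open>Valuation along D_lambda: a character chi has order - <lambda,chi>.\<close>
definition val :: "int \<times> int \<Rightarrow> lpoly \<Rightarrow> int" where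
  "val l p = - topw l p"

text \<open>Restriction of the initial form of p along D_lambda, pulled back along
  mu : G_m -> T (coordinate z): chi |-> z^<mu,chi>.\<close>
definition restr :: "int \<times> int \<Rightarrow> int \<times> int \<Rightarrow> lpoly \<Rightarrow> rat \<Rightarrow> rat" where
  "restr l m p z = (\<Sum>c\<in>{c\<in>supp p. pairing l c = topw l p}. p c * z powi pairing m c)"

definition rval :: "int \<times> int \<Rightarrow> ratfun \<Rightarrow> int" where
  "rval l f = val l (fst f) - val l (snd f)"

definition rrestr :: "int \<times> int \<Rightarrow> int \<times> int \<Rightarrow> ratfun \<Rightarrow> rat \<Rightarrow> rat" where
  "rrestr l m f z = restr l m (fst f) z / restr l m (snd f) z"

definition tame :: "int \<times> int \<Rightarrow> int \<times> int \<Rightarrow> ratfun \<times> ratfun \<Rightarrow> rat \<Rightarrow> rat" where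
  "tame l m fg z =
     (-1) powi (rval l (fst fg) * rval l (snd fg))
     * rrestr l m (snd fg) z powi rval l (fst fg)
     * rrestr l m (fst fg) z powi (- rval l (snd fg))"

text \<open>An element kappa of K_2(Q(T)) is represented as a product of symbols
  {f_i, g_i}, given as a list of pairs; its residue is the product of tame symbols.\<close>
definition residue :: "int \<times> int \<Rightarrow> int \<times> int \<Rightarrow> (ratfun \<times> ratfun) list \<Rightarrow> rat \<Rightarrow> rat" where
  "residue l m k z = prod_list (map (\<lambda>fg. tame l m fg z) k)"

definition symbol_ok :: "ratfun \<times> ratfun \<Rightarrow> bool" where
  "symbol_ok fg \<longleftrightarrow> nonzero_lpoly (fst (fst fg)) \<and> nonzero_lpoly (snd (fst fg))
      \<and> nonzero_lpoly (fst (snd fg)) \<and> nonzero_lpoly (snd (snd fg))"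

definition generic_pt :: "int \<times> int \<Rightarrow> int \<times> int \<Rightarrow> (ratfun \<times> ratfun) list \<Rightarrow> rat \<Rightarrow> bool" where
  "generic_pt l m k z \<longleftrightarrow> z \<noteq> 0 \<and>
     (\<forall>fg\<in>set k. restr l m (fst (fst fg)) z \<noteq> 0 \<and> restr l m (snd (fst fg)) z \<noteq> 0
        \<and> restr l m (fst (snd fg)) z \<noteq> 0 \<and> restr l m (snd (snd fg)) z \<noteq> 0)"

text \<open>S^1 is modelled as the unit circle in R^2; the ray R_+ lambda is sgn lambda.\<close>
definition ray :: "int \<times> int \<Rightarrow> real \<times> real" where
  "ray l = sgn (real_of_int (fst l), real_of_int (snd l))"

definition rational_rays :: "(real \<times> real) set" where
  "rational_rays = ray ` {l. l \<noteq> (0, 0)}"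

end

theory Submission
  imports Defs
begin


definition dot :: "real \<times> real \<Rightarrow> int \<times> int \<Rightarrow> real" where
  "dot x c = fst x * of_int (fst c) + snd x * of_int (snd c)"

definition vert :: "real \<times> real \<Rightarrow> lpoly \<Rightarrow> int \<times> int" where
  "vert x p = (SOME v. v \<in> supp p \<and> (\<forall>c\<in>supp p. c \<noteq> v \<longrightarrow> dot x c < dot x v))"

lemma dot_diff: "dot x (c - c') = dot x c - dot x c'"
  by (simp add: dot_def algebra_simps)

lemma vert_eq:
  assumes "v \<in> supp p" "\<forall>c\<in>supp p. c \<noteq> v \<longrightarrow> dot x c < dot x v"
  shows "vert x p = v"
  unfolding vert_def
proof (rule some_equality)
  show "v \<in> supp p \<and> (\<forall>c\<in>supp p. c \<noteq> v \<longrightarrow> dot x c < dot x v)" using assms by blast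
next
  fix w assume "w \<in> supp p \<and> (\<forall>c\<in>supp p. c \<noteq> w \<longrightarrow> dot x c < dot x w)"
  then show "w = v" using assms by force
qed

lemma vert_ex:
  assumes "finite S" "S \<noteq> {}" "\<forall>c\<in>S. \<forall>c'\<in>S. c \<noteq> c' \<longrightarrow> dot x (c - c') \<noteq> 0"
  shows "\<exists>v\<in>S. \<forall>c\<in>S. c \<noteq> v \<longrightarrow> dot x c < dot x v"
proof -
  obtain v where v: "v \<in> S" "dot x v = Max (dot x ` S)"
  proof -
    have "Max (dot x ` S) \<in> dot x ` S" using Max_in[of "dot x ` S"] assms by blast
    then show ?thesis using that by (metis imageE)
  qed
  have "\<forall>c\<in>S. c \<noteq> v \<longrightarrow> dot x c < dot x v"
  proof (intro ballI impI)
    fix c assume c: "c \<in> S" "c \<noteq> v"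
    have "dot x c \<le> dot x v" using v c assms(1) by simp
    moreover have "dot x c \<noteq> dot x v" using assms(3) c v(1) by (metis dot_diff eq_iff_diff_eq_0)
    ultimately show "dot x c < dot x v" by simp
  qed
  with v show ?thesis by blast
qed

lemma vert_good:
  assumes "nonzero_lpoly p" "\<forall>c\<in>supp p. \<forall>c'\<in>supp p. c \<noteq> c' \<longrightarrow> dot x (c - c') \<noteq> 0"
  shows "vert x p \<in> supp p \<and> (\<forall>c\<in>supp p. c \<noteq> vert x p \<longrightarrow> dot x c < dot x (vert x p))"
proof -
  obtain v where "v \<in> supp p" "\<forall>c\<in>supp p. c \<noteq> v \<longrightarrow> dot x c < dot x v"
    using vert_ex[of "supp p" x] assms unfolding nonzero_lpoly_def by blast
  with vert_eq[OF this] show ?thesis by simp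
qed

lemma dot_ray:
  assumes "l \<noteq> (0,0)"
  shows "dot (ray l) c = of_int (pairing l c) / norm (real_of_int (fst l), real_of_int (snd l))"
  unfolding ray_def dot_def pairing_def sgn_div_norm
  by (simp add: divide_inverse algebra_simps)

lemma norm_pos: "l \<noteq> (0,0) \<Longrightarrow> norm (real_of_int (fst l), real_of_int (snd l)) > 0"
  by (cases l) (auto simp: zero_prod_def)

lemma restr_vert:
  assumes "l \<noteq> (0,0)" "v \<in> supp p" "\<forall>c\<in>supp p. c \<noteq> v \<longrightarrow> dot (ray l) c < dot (ray l) v"
    "finite (supp p)"
  shows "topw l p = pairing l v" "restr l m p z = p v * z powi pairing m v"
proof -
  have lt: "pairing l c < pairing l v" if "c \<in> supp p" "c \<noteq> v" for c
  proof -
    have "dot (ray l) c < dot (ray l) v" using assms that by blast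
    then show ?thesis using norm_pos[OF assms(1)] unfolding dot_ray[OF assms(1)]
      by (simp add: divide_less_cancel)
  qed
  show t: "topw l p = pairing l v" unfolding topw_def
  proof (rule Max_eqI)
    show "finite (pairing l ` supp p)" using assms by simp
    show "y \<le> pairing l v" if "y \<in> pairing l ` supp p" for y
      using that lt by (smt (verit, best) imageE)
    show "pairing l v \<in> pairing l ` supp p" using assms by simp
  qed
  have "{c\<in>supp p. pairing l c = topw l p} = {v}"
    using t lt assms(2) by force
  then show "restr l m p z = p v * z powi pairing m v" unfolding restr_def by simp
qed

lemma alg:
  fixes z :: rat
  assumes "z \<noteq> 0"
  shows "(-1) powi (vf * vg) * (Cg * z powi eg) powi vf * (Cf * z powi ef) powi (-vg)
      = ((-1) powi (vf * vg) * Cg powi vf * Cf powi (-vg)) * z powi (eg * vf - ef * vg)"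
proof -
  have "z powi (eg * vf - ef * vg) = z powi (eg * vf) * z powi (ef * (-vg))"
    using power_int_add[of z "eg * vf" "ef * (-vg)"] assms by (simp add: algebra_simps)
  moreover have "(z powi eg) powi vf = z powi (eg * vf)" "(z powi ef) powi (-vg) = z powi (ef * (-vg))"
    by (simp_all only: power_int_mult)
  ultimately show ?thesis by (simp add: power_int_mult_distrib)
qed

lemma wedge_id: "wedge m l = 1 \<Longrightarrow>
  pairing m b * (- pairing l a) - pairing m a * (- pairing l b) = wedge a b"
proof -
  assume h: "wedge m l = 1"
  have "pairing m b * (- pairing l a) - pairing m a * (- pairing l b) = wedge m l * wedge a b"
    unfolding wedge_def pairing_def by (simp add: algebra_simps)
  then show ?thesis using h by simp
qed


lemma pairing_diff: "pairing l (a - b) = pairing l a - pairing l b"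
  by (simp add: pairing_def algebra_simps)

lemma tame_mono:
  fixes p1 q1 p2 q2 :: lpoly and V :: "lpoly \<Rightarrow> int \<times> int"
  assumes w: "wedge m l = 1"
    and h: "\<And>p. p \<in> {p1,q1,p2,q2} \<Longrightarrow> topw l p = pairing l (V p) \<and>
        (\<forall>z. restr l m p z = p (V p) * z powi pairing m (V p)) \<and> p (V p) \<noteq> 0"
  shows "\<exists>K. K \<noteq> 0 \<and> (\<forall>z. z \<noteq> 0 \<longrightarrow> tame l m ((p1,q1),(p2,q2)) z
           = K * z powi wedge (V p1 - V q1) (V p2 - V q2))"
proof -
  define a where "a = V p1 - V q1"
  define b where "b = V p2 - V q2"
  define Cf where "Cf = p1 (V p1) / q1 (V q1)"
  define Cg where "Cg = p2 (V p2) / q2 (V q2)"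
  define vf where "vf = - pairing l a"
  define vg where "vg = - pairing l b"
  have rv1: "rval l (p1,q1) = vf" using h[of p1] h[of q1]
    by (simp add: rval_def val_def vf_def a_def pairing_diff)
  have rv2: "rval l (p2,q2) = vg" using h[of p2] h[of q2]
    by (simp add: rval_def val_def vg_def b_def pairing_diff)
  have rr1: "rrestr l m (p1,q1) z = Cf * z powi pairing m a" if "z \<noteq> 0" for z :: rat
    using h[of p1] h[of q1] that
    by (simp add: rrestr_def Cf_def a_def pairing_diff power_int_diff)
  have rr2: "rrestr l m (p2,q2) z = Cg * z powi pairing m b" if "z \<noteq> 0" for z :: rat
    using h[of p2] h[of q2] that
    by (simp add: rrestr_def Cg_def b_def pairing_diff power_int_diff)
  define K where "K = (-1) powi (vf * vg) * Cg powi vf * Cf powi (-vg)"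
  have "K \<noteq> 0" using h[of p1] h[of q1] h[of p2] h[of q2]
    by (simp add: K_def Cf_def Cg_def)
  moreover have "tame l m ((p1,q1),(p2,q2)) z = K * z powi wedge a b" if "z \<noteq> 0" for z :: rat
  proof -
    have "tame l m ((p1,q1),(p2,q2)) z
       = (-1) powi (vf * vg) * (Cg * z powi pairing m b) powi vf * (Cf * z powi pairing m a) powi (-vg)"
      unfolding tame_def using rv1 rv2 rr1[OF that] rr2[OF that] by simp
    also have "\<dots> = K * z powi (pairing m b * vf - pairing m a * vg)"
      unfolding K_def by (rule alg[OF that])
    also have "pairing m b * vf - pairing m a * vg = wedge a b"
      unfolding vf_def vg_def by (rule wedge_id[OF w])
    finally show ?thesis .
  qed
  ultimately show ?thesis unfolding a_def b_def by blast
qed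

lemma residue_mono:
  fixes z :: rat
  assumes "z \<noteq> 0" "\<forall>fg\<in>set k. tame l m fg z = K fg * z powi W fg"
  shows "residue l m k z = prod_list (map K k) * z powi sum_list (map W k)"
  using assms(2)
proof (induction k)
  case Nil
  then show ?case by (simp add: residue_def)
next
  case (Cons fg k)
  then have "residue l m k z = prod_list (map K k) * z powi sum_list (map W k)" by simp
  then show ?case using Cons.prems assms(1)
    by (simp add: residue_def power_int_add)
qed

lemma geom:
  assumes "norm (x :: real \<times> real) = 1" "d \<noteq> (0,0)" "dot x d = 0"
  shows "x = ray (- snd d, fst d) \<or> x = ray (snd d, - fst d)"
proof -
  obtain x1 x2 where x: "x = (x1, x2)" by (cases x)
  obtain d1 d2 where d: "d = (d1, d2)" by (cases d)
  define r1 where "r1 = real_of_int d1"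
  define r2 where "r2 = real_of_int d2"
  have e: "x1 * r1 + x2 * r2 = 0" using assms(3) by (simp add: dot_def x d r1_def r2_def)
  have nz: "r1^2 + r2^2 > 0" using assms(2) d r1_def r2_def
    by (auto simp: add_pos_nonneg add_nonneg_pos)
  define t where "t = (x2 * r1 - x1 * r2) / (r1^2 + r2^2)"
  have "x1 = t * (- r2)"
  proof -
    have tN: "t * (r1^2 + r2^2) = x2 * r1 - x1 * r2" unfolding t_def using nz by simp
    have "t * (- r2) * (r1^2 + r2^2) = -(t * (r1^2 + r2^2)) * r2" by (simp add: algebra_simps)
    then have a1: "t * (- r2) * (r1^2 + r2^2) = -(x2 * r1 - x1 * r2) * r2" using tN by simp
    have a2: "-(x2 * r1 - x1 * r2) * r2 - x1 * (r1^2 + r2^2) = - r1 * (x1 * r1 + x2 * r2)"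
      by (simp add: power2_eq_square algebra_simps)
    have c: "-(x2 * r1 - x1 * r2) * r2 = x1 * (r1^2 + r2^2)" using a2 e by simp
    have "t * (- r2) * (r1^2 + r2^2) = x1 * (r1^2 + r2^2)"
      using a1 c by (rule trans)
    then show ?thesis using nz by (metis mult_right_cancel order_less_irrefl)
  qed
  moreover have "x2 = t * r1"
  proof -
    have tN: "t * (r1^2 + r2^2) = x2 * r1 - x1 * r2" unfolding t_def using nz by simp
    have "t * r1 * (r1^2 + r2^2) = (t * (r1^2 + r2^2)) * r1" by (simp add: algebra_simps)
    then have a1: "t * r1 * (r1^2 + r2^2) = (x2 * r1 - x1 * r2) * r1" using tN by simp
    have a2: "(x2 * r1 - x1 * r2) * r1 - x2 * (r1^2 + r2^2) = - r2 * (x1 * r1 + x2 * r2)"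
      by (simp add: power2_eq_square algebra_simps)
    have c: "(x2 * r1 - x1 * r2) * r1 = x2 * (r1^2 + r2^2)" using a2 e by simp
    have "t * r1 * (r1^2 + r2^2) = x2 * (r1^2 + r2^2)"
      using a1 c by (rule trans)
    then show ?thesis using nz by (metis mult_right_cancel order_less_irrefl)
  qed
  ultimately have xt: "x = t *\<^sub>R (- r2, r1)" using x by simp
  have "x = sgn x" using assms(1) by (simp add: sgn_div_norm)
  also have "\<dots> = sgn t *\<^sub>R sgn (- r2, r1)" unfolding xt sgn_scaleR ..
  finally have xs: "x = sgn t *\<^sub>R sgn (- r2, r1)" .
  have r1: "ray (- snd d, fst d) = sgn (- r2, r1)" by (simp add: ray_def d r1_def r2_def)
  have r2: "ray (snd d, - fst d) = - sgn (- r2, r1)"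
  proof -
    have "(r2, - r1) = - (- r2, r1)" by simp
    then have "ray (snd d, - fst d) = sgn (- (- r2, r1))" by (simp add: ray_def d r1_def r2_def)
    then show ?thesis by (simp only: sgn_minus)
  qed
  have "t \<noteq> 0" using xt assms(1) by auto
  then have "sgn t = 1 \<or> sgn t = -1" by (simp add: sgn_real_def)
  then show ?thesis using xs r1 r2 by auto
qed


definition polys :: "(ratfun \<times> ratfun) list \<Rightarrow> lpoly set" where
  "polys k = set (concat (map (\<lambda>fg. [fst (fst fg), snd (fst fg), fst (snd fg), snd (snd fg)]) k))"

lemma polys_mem: "fg \<in> set k \<Longrightarrow> fst (fst fg) \<in> polys k \<and> snd (fst fg) \<in> polys k
   \<and> fst (snd fg) \<in> polys k \<and> snd (snd fg) \<in> polys k"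
  unfolding polys_def by auto

lemma vert_local:
  assumes fin: "finite D" and good: "\<forall>d\<in>D. dot x d \<noteq> 0"
    and P: "\<forall>p\<in>P. \<forall>c\<in>supp p. \<forall>c'\<in>supp p. c \<noteq> c' \<longrightarrow> c - c' \<in> D"
    and nz: "\<forall>p\<in>P. nonzero_lpoly p"
  shows "eventually (\<lambda>y. \<forall>p\<in>P. vert y p = vert x p) (at x)"
proof -
  have "eventually (\<lambda>y. (0 < dot x d \<longrightarrow> 0 < dot y d) \<and> (dot x d < 0 \<longrightarrow> dot y d < 0)) (at x)"
    for d
  proof -
    have t: "((\<lambda>y. dot y d) \<longlongrightarrow> dot x d) (at x)"
      unfolding dot_def by (intro tendsto_intros)
    show ?thesis
      using order_tendstoD(1)[OF t, of 0] order_tendstoD(2)[OF t, of 0]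
      by (cases "0 < dot x d"; cases "dot x d < 0") (auto elim: eventually_mono)
  qed
  then have ev: "eventually (\<lambda>y. \<forall>d\<in>D. (0 < dot x d \<longrightarrow> 0 < dot y d) \<and> (dot x d < 0 \<longrightarrow> dot y d < 0)) (at x)"
    using fin by (simp add: eventually_ball_finite)
  show ?thesis
  proof (rule eventually_mono[OF ev], intro ballI)
    fix y p
    assume y: "\<forall>d\<in>D. (0 < dot x d \<longrightarrow> 0 < dot y d) \<and> (dot x d < 0 \<longrightarrow> dot y d < 0)" and p: "p \<in> P"
    have g: "\<forall>c\<in>supp p. \<forall>c'\<in>supp p. c \<noteq> c' \<longrightarrow> dot x (c - c') \<noteq> 0"
      using P p good by blast
    note v = vert_good[OF bspec[OF nz p] g]
    show "vert y p = vert x p"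
    proof (rule vert_eq)
      show "vert x p \<in> supp p" using v by blast
      show "\<forall>c\<in>supp p. c \<noteq> vert x p \<longrightarrow> dot y c < dot y (vert x p)"
      proof (intro ballI impI)
        fix c assume c: "c \<in> supp p" "c \<noteq> vert x p"
        have "vert x p - c \<in> D" using P p c v by metis
        moreover have "0 < dot x (vert x p - c)" using v c by (simp add: dot_diff)
        ultimately have "0 < dot y (vert x p - c)" using y by blast
        then show "dot y c < dot y (vert x p)" by (simp add: dot_diff)
      qed
    qed
  qed
qed

theorem mainTheorem13:
  fixes \<kappa> :: "(ratfun \<times> ratfun) list"
  assumes "\<forall>fg\<in>set \<kappa>. symbol_ok fg"
  shows "\<exists>(\<Sigma> :: (real \<times> real) set) (n :: real \<times> real \<Rightarrow> int).
           finite \<Sigma> \<and> \<Sigma> \<subseteq> rational_rays \<and>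
           continuous_on (sphere 0 1 - \<Sigma>) n \<and>
           (\<forall>l. primitive l \<and> ray l \<notin> \<Sigma> \<longrightarrow>
              (\<forall>m. wedge m l = 1 \<longrightarrow>
                 (\<exists>c :: rat. c \<noteq> 0 \<and>
                    (\<forall>z. generic_pt l m \<kappa> z \<longrightarrow> residue l m \<kappa> z = c * z powi n (ray l)))))"
proof -
  define P where "P = polys \<kappa>"
  have nzP: "\<forall>p\<in>P. nonzero_lpoly p"
    using assms unfolding P_def polys_def symbol_ok_def by auto
  have finP: "finite P" unfolding P_def polys_def by simp
  define D where "D = (\<lambda>(c, c'). c - c') ` (\<Union>p\<in>P. {(c, c'). c \<in> supp p \<and> c' \<in> supp p \<and> c \<noteq> c'})"
  have finD: "finite D"
  proof -
    have "finite (\<Union>p\<in>P. supp p \<times> supp p)" using finP nzP unfolding nonzero_lpoly_def by auto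
    then have "finite (\<Union>p\<in>P. {(c, c'). c \<in> supp p \<and> c' \<in> supp p \<and> c \<noteq> c'})"
      by (rule finite_subset[rotated]) auto
    then show ?thesis unfolding D_def by simp
  qed
  have PD: "\<forall>p\<in>P. \<forall>c\<in>supp p. \<forall>c'\<in>supp p. c \<noteq> c' \<longrightarrow> c - c' \<in> D"
    unfolding D_def by blast
  have D0: "d \<noteq> (0,0)" if "d \<in> D" for d
    using that unfolding D_def by (force simp: zero_prod_def)
  define \<Sigma> where "\<Sigma> = (\<lambda>d. ray (- snd d, fst d)) ` D \<union> (\<lambda>d. ray (snd d, - fst d)) ` D"
  define n where "n x = sum_list (map (\<lambda>fg. wedge (vert x (fst (fst fg)) - vert x (snd (fst fg)))
      (vert x (fst (snd fg)) - vert x (snd (snd fg)))) \<kappa>)" for x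
  have fin\<Sigma>: "finite \<Sigma>" unfolding \<Sigma>_def using finD by simp
  have rat\<Sigma>: "\<Sigma> \<subseteq> rational_rays"
    unfolding \<Sigma>_def rational_rays_def using D0 by force
  have good: "\<forall>d\<in>D. dot x d \<noteq> 0" if "x \<in> sphere 0 1 - \<Sigma>" for x
  proof
    fix d assume d: "d \<in> D"
    show "dot x d \<noteq> 0"
    proof
      assume "dot x d = 0"
      then have "x = ray (- snd d, fst d) \<or> x = ray (snd d, - fst d)"
        using geom[of x d] that D0[OF d] by simp
      then show False using that d unfolding \<Sigma>_def by blast
    qed
  qed
  have nloc: "eventually (\<lambda>y. n y = n x) (at x)" if "x \<in> sphere 0 1 - \<Sigma>" for x
  proof -
    have "eventually (\<lambda>y. \<forall>p\<in>P. vert y p = vert x p) (at x)"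
      by (rule vert_local[OF finD good[OF that] PD nzP])
    then show ?thesis
    proof (rule eventually_mono)
      fix y assume h: "\<forall>p\<in>P. vert y p = vert x p"
      show "n y = n x" unfolding n_def
        by (rule arg_cong[where f = sum_list], rule map_cong[OF refl])
           (use h polys_mem in \<open>simp add: P_def\<close>)
    qed
  qed
  have cont: "continuous_on (sphere 0 1 - \<Sigma>) n"
    unfolding continuous_on_eq_continuous_within
  proof
    fix x assume x: "x \<in> sphere 0 1 - \<Sigma>"
    have "eventually (\<lambda>y. n y = n x) (at x within (sphere 0 1 - \<Sigma>))"
      using filter_leD[OF at_le[OF subset_UNIV] nloc[OF x]] by simp
    then show "continuous (at x within (sphere 0 1 - \<Sigma>)) n"
      unfolding continuous_within by (rule tendsto_eventually)
  qed
  have res: "\<exists>c :: rat. c \<noteq> 0 \<and>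
                    (\<forall>z. generic_pt l m \<kappa> z \<longrightarrow> residue l m \<kappa> z = c * z powi n (ray l))"
    if l: "primitive l" "ray l \<notin> \<Sigma>" and m: "wedge m l = 1" for l m
  proof -
    have l0: "l \<noteq> (0,0)" using l(1) unfolding primitive_def by auto
    define x where "x = ray l"
    have "norm x = 1" unfolding x_def ray_def using l0 by (cases l) (simp add: norm_sgn zero_prod_def)
    then have xs: "x \<in> sphere 0 1 - \<Sigma>" using l(2) x_def by simp
    have V: "topw l p = pairing l (vert x p) \<and>
        (\<forall>z. restr l m p z = p (vert x p) * z powi pairing m (vert x p)) \<and> p (vert x p) \<noteq> 0"
      if p: "p \<in> P" for p
    proof -
      have g: "\<forall>c\<in>supp p. \<forall>c'\<in>supp p. c \<noteq> c' \<longrightarrow> dot x (c - c') \<noteq> 0"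
        using PD p good[OF xs] by blast
      note v = vert_good[OF bspec[OF nzP p] g]
      have fs: "finite (supp p)" using nzP p unfolding nonzero_lpoly_def by blast
      show ?thesis using restr_vert[OF l0, of "vert x p" p] v fs unfolding x_def
        by (simp add: supp_def)
    qed
    have "\<forall>fg\<in>set \<kappa>. \<exists>K. K \<noteq> 0 \<and> (\<forall>z. z \<noteq> 0 \<longrightarrow> tame l m fg z
           = K * z powi wedge (vert x (fst (fst fg)) - vert x (snd (fst fg)))
                 (vert x (fst (snd fg)) - vert x (snd (snd fg))))"
    proof
      fix fg assume fg: "fg \<in> set \<kappa>"
      obtain p1 q1 p2 q2 where e: "fg = ((p1,q1),(p2,q2))" by (metis prod.collapse)
      have "p \<in> P" if "p \<in> {p1,q1,p2,q2}" for p
        using polys_mem[OF fg] that e unfolding P_def by auto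
      then show "\<exists>K. K \<noteq> 0 \<and> (\<forall>z. z \<noteq> 0 \<longrightarrow> tame l m fg z
           = K * z powi wedge (vert x (fst (fst fg)) - vert x (snd (fst fg)))
                 (vert x (fst (snd fg)) - vert x (snd (snd fg))))"
        using tame_mono[OF m, of p1 q1 p2 q2 "vert x"] V e by simp
    qed
    then obtain K where K: "\<forall>fg\<in>set \<kappa>. K fg \<noteq> 0 \<and> (\<forall>z. z \<noteq> 0 \<longrightarrow> tame l m fg z
           = K fg * z powi wedge (vert x (fst (fst fg)) - vert x (snd (fst fg)))
                 (vert x (fst (snd fg)) - vert x (snd (snd fg))))"
      by metis
    show ?thesis
    proof (intro exI conjI allI impI)
      show "prod_list (map K \<kappa>) \<noteq> 0" using K by (induction \<kappa>) auto
      fix z assume "generic_pt l m \<kappa> z"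
      then have z: "z \<noteq> 0" unfolding generic_pt_def by blast
      show "residue l m \<kappa> z = prod_list (map K \<kappa>) * z powi n (ray l)"
        unfolding n_def x_def[symmetric]
        by (rule residue_mono[OF z]) (use K z in blast)
    qed
  qed
  show ?thesis
    by (rule exI[of _ \<Sigma>], rule exI[of _ n]) (use fin\<Sigma> rat\<Sigma> cont res in blast)
qed

end
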